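(* Let $\delta,\lambda>0$ and let $S$ be the inverse Gaussian subordinator with Laplace exponent $\phi(s)=\delta\left(\sqrt{2s+\lambda^2}-\lambda\right)$, i.e. $\mathbb{E}[e^{-sS(t)}]=e^{-t\phi(s)}$. Let $u$ be the potential density of $S$. Then \begin{enumerate} \item $u(x)\sim \dfrac{1}{\delta\sqrt{2\pi x}}$ as $x\to 0^+$; \item $u(x)\sim \dfrac{\lambda}{\delta}$ as $x\to\infty$. \end{enumerate}
   Context: The potential measure of a subordinator $S$ is $U(A)=\mathbb{E}\left[\int_0^\infty \mathbf{1}_{\{S(t)\in A\}}\,dt\right]$ for Borel $A\subset(0,\infty)$; its density $u$ (potential density) satisfies $\int_0^\infty e^{-sx}u(x)\,dx=1/\phi(s)$. $f\sim g$ means $f/g\to1$. *)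

theory Defs
  imports "HOL-Probability.Probability" "HOL-Library.Landau_Symbols"
begin

definition ig_exponent :: "real \<Rightarrow> real \<Rightarrow> real \<Rightarrow> real" where
  "ig_exponent \<delta> lam s = \<delta> * (sqrt (2 * s + lam\<^sup>2) - lam)"

definition potential_measure :: "'a measure \<Rightarrow> (real \<Rightarrow> 'a \<Rightarrow> real) \<Rightarrow> real set \<Rightarrow> ennreal" where
  "potential_measure M S A =
     (\<integral>\<^sup>+ \<omega>. (\<integral>\<^sup>+ t\<in>{0..}. indicator A (S t \<omega>) \<partial>lborel) \<partial>M)"

end

theory Submission
  imports Defs "HOL-Real_Asymp.Real_Asymp"
begin

lemma laplace_unique_pos:
  fixes w :: "real \<Rightarrow> real"
  assumes cont: "continuous_on {0<..} w"
  and int: "\<And>k::nat. integrable lborel (\<lambda>x. indicator {0<..} x * exp(-(real k+1)*x) * w x)"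
  and zero: "\<And>k::nat. (\<integral>x. indicator {0<..} x * exp(-(real k+1)*x) * w x \<partial>lborel) = 0"
  and x0: "x0 > 0"
  shows "\<not> w x0 > 0"
proof
  assume wpos: "w x0 > 0"
  define c where "c = w x0 / 2"
  have c: "c > 0" "c < w x0" using wpos by (auto simp: c_def)
  have "isCont w x0" using cont x0 continuous_on_eq_continuous_at[of "{0<..}" w] by auto
  then have "eventually (\<lambda>x. w x > c) (at x0)"
    using c by (metis isCont_def order_tendstoD(1))
  then obtain d where d: "d > 0" "\<And>x. x \<noteq> x0 \<Longrightarrow> dist x x0 < d \<Longrightarrow> w x > c"
    unfolding eventually_at by blast
  define r where "r = min d (x0/2)"
  have r: "r > 0" "r < x0" using d x0 by (auto simp: r_def)
  have wr: "w x > c" if "\<bar>x - x0\<bar> < r" for x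
    using d c that by (cases "x = x0") (auto simp: r_def dist_real_def)
  define h where "h = (\<lambda>x::real. indicator {0<..} x * exp(-x) * w x)"
  have hint: "integrable lborel h" using int[of 0] by (simp add: h_def)
  define b where "b x = max 0 (r - \<bar>x - x0\<bar>)" for x :: real
  define c0 where "c0 = exp (-(x0+r))"
  have c0: "c0 > 0" by (simp add: c0_def)
  define F where "F y = b (- ln (max y c0))" for y
  have Fc: "continuous_on UNIV F"
    unfolding F_def b_def using c0 by (intro continuous_intros) auto
  have Fb: "F (exp (-x)) = b x" if "x > 0" for x
  proof (cases "exp (-x) \<ge> c0")
    case True then show ?thesis by (simp add: F_def max_def)
  next
    case False
    then have "x > x0 + r" using c0_def by auto
    then show ?thesis using False by (auto simp: F_def b_def c0_def max_def)
  qed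
  have bnd: "0 \<le> b x" "b x \<le> r" for x using r by (auto simp: b_def)
  have bm[measurable]: "b \<in> borel_measurable borel" unfolding b_def by measurable
  have hbint: "integrable lborel (\<lambda>x. h x * b x)"
    by (rule Bochner_Integration.integrable_bound[OF integrable_mult_right[OF integrable_abs[OF hint], of r]])
       (use hint bnd r in \<open>auto simp: abs_mult mult.commute[of r] intro!: AE_I2 mult_left_mono\<close>)
  define C where "C = (\<integral>x. \<bar>h x\<bar> \<partial>lborel)"
  have C: "C \<ge> 0" unfolding C_def by simp
  have Fm[measurable]: "F \<in> borel_measurable borel" using Fc by (simp add: borel_measurable_continuous_onI)
  have approx: "\<bar>\<integral>x. h x * b x \<partial>lborel\<bar> \<le> e * C" if e: "e > 0" for e
  proof -
    obtain p where pf: "polynomial_function p" and pa: "\<And>y. y \<in> {0..1} \<Longrightarrow> norm (F y - p y) < e"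
      using Stone_Weierstrass_polynomial_function[of "{0..1::real}" F e] Fc e
        continuous_on_subset[OF Fc, of "{0..1}"] by auto
    obtain a n where pe: "p = (\<lambda>y. \<Sum>i\<le>n. a i * y^i)"
      using pf real_polynomial_function_iff_sum real_polynomial_function_eq by metis
    have pm[measurable]: "p \<in> borel_measurable borel" unfolding pe by measurable
    have hp: "h x * p (exp (-x)) = (\<Sum>i\<le>n. a i * (indicator {0<..} x * exp(-(real i+1)*x) * w x))" for x
    proof -
      have "exp (-x) ^ i * exp (-x) = exp(-(real i+1)*x)" for i
        by (simp add: exp_of_nat_mult[symmetric] exp_add[symmetric] algebra_simps)
      then show ?thesis unfolding pe h_def sum_distrib_left sum_distrib_right
        by (intro sum.cong refl) (simp add: algebra_simps)
    qed
    have hpint: "integrable lborel (\<lambda>x. h x * p (exp (-x)))"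
      unfolding hp by (rule Bochner_Integration.integrable_sum, rule integrable_mult_right, rule int)
    have hp0: "(\<integral>x. h x * p (exp (-x)) \<partial>lborel) = 0"
      unfolding hp using int zero by (subst Bochner_Integration.integral_sum) auto
    have hb: "h x * b x = h x * F (exp (-x))" for x
      by (cases "x > 0") (auto simp: h_def Fb)
    have dint: "integrable lborel (\<lambda>x. h x * (F (exp (-x)) - p (exp (-x))))"
    proof (rule Bochner_Integration.integrable_bound[OF integrable_mult_right[OF integrable_abs[OF hint], of e]])
      show "(\<lambda>x. h x * (F (exp (-x)) - p (exp (-x)))) \<in> borel_measurable lborel"
        using hint by measurable
      have "\<bar>h x\<bar> * \<bar>F (exp (-x)) - p (exp (-x))\<bar> \<le> e * \<bar>h x\<bar>" for x
      proof (cases "x > 0")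
        case True
        then have "exp (-x) \<in> {0..1}" by auto
        from pa[OF this] show ?thesis by (simp add: mult.commute[of e] mult_left_mono less_imp_le)
      qed (simp add: h_def)
      then show "AE x in lborel. norm (h x * (F (exp (-x)) - p (exp (-x)))) \<le> norm (e * \<bar>h x\<bar>)"
        using e by (auto simp: abs_mult)
    qed
    have "(\<integral>x. h x * b x \<partial>lborel) = (\<integral>x. h x * (F (exp (-x)) - p (exp (-x))) \<partial>lborel) + (\<integral>x. h x * p (exp (-x)) \<partial>lborel)"
    proof -
      have "(\<lambda>x. h x * b x) = (\<lambda>x. h x * (F (exp (-x)) - p (exp (-x))) + h x * p (exp (-x)))"
        unfolding hb by (simp add: algebra_simps)
      then show ?thesis using Bochner_Integration.integral_add[OF dint hpint] by simp
    qed
    also have "\<dots> = (\<integral>x. h x * (F (exp (-x)) - p (exp (-x))) \<partial>lborel)" using hp0 by simp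
    finally have eq: "(\<integral>x. h x * b x \<partial>lborel) = (\<integral>x. h x * (F (exp (-x)) - p (exp (-x))) \<partial>lborel)" .
    have "\<bar>\<integral>x. h x * (F (exp (-x)) - p (exp (-x))) \<partial>lborel\<bar> \<le> (\<integral>x. e * \<bar>h x\<bar> \<partial>lborel)"
    proof (rule integral_abs_bound_integral)
      show "integrable lborel (\<lambda>x. e * \<bar>h x\<bar>)" using hint by auto
      show "\<bar>h x * (F (exp (-x)) - p (exp (-x)))\<bar> \<le> e * \<bar>h x\<bar>" for x
      proof (cases "x > 0")
        case True
        then have "exp (-x) \<in> {0..1}" by auto
        from pa[OF this] show ?thesis by (simp add: abs_mult mult.commute[of e] mult_left_mono less_imp_le)
      qed (simp add: h_def)
    qed (rule dint)
    also have "\<dots> = e * C" by (simp add: C_def)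
    finally show ?thesis using eq by simp
  qed
  have I0: "(\<integral>x. h x * b x \<partial>lborel) = 0"
  proof (rule ccontr)
    assume ne: "(\<integral>x. h x * b x \<partial>lborel) \<noteq> 0"
    let ?I = "\<bar>\<integral>x. h x * b x \<partial>lborel\<bar>"
    have "?I \<le> ?I / (C + 1) * C" using approx[of "?I / (C+1)"] ne C by auto
    also have "\<dots> < ?I" using ne C by (simp add: field_simps)
    finally show False by simp
  qed
  define K where "K = c0 * c * (r/2)"
  have K: "K > 0" using c0 c r by (simp add: K_def)
  have "(\<integral>x. indicator {x0 - r/2 .. x0 + r/2} x * K \<partial>lborel) \<le> (\<integral>x. h x * b x \<partial>lborel)"
  proof (rule integral_mono)
    show "integrable lborel (\<lambda>x. indicator {x0 - r/2 .. x0 + r/2} x * K)"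
    proof -
      have "emeasure lborel {x0 - r/2 .. x0 + r/2} < \<top>" using r by (simp add: emeasure_lborel_Icc_eq)
      then have "integrable lborel (indicator {x0 - r/2 .. x0 + r/2} :: real \<Rightarrow> real)"
        by (intro integrable_real_indicator) auto
      then show ?thesis by simp
    qed
    show "integrable lborel (\<lambda>x. h x * b x)" by (rule hbint)
    show "indicator {x0 - r/2 .. x0 + r/2} x * K \<le> h x * b x" for x
    proof (cases "x \<in> {x0 - r/2 .. x0 + r/2}")
      case True
      then have x: "x > 0" "\<bar>x - x0\<bar> < r" "\<bar>x - x0\<bar> \<le> r/2" using r by (auto simp: abs_if)
      have "c0 \<le> exp (-x)" using x unfolding c0_def by auto
      moreover have "c < w x" using wr x by auto
      moreover have "r/2 \<le> b x" using x by (auto simp: b_def)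
      ultimately have "c0 * c * (r/2) \<le> exp (-x) * w x * b x"
        using c0 c r by (intro mult_mono) auto
      then show ?thesis using True x by (simp add: h_def K_def)
    next
      case False
      have "0 \<le> h x * b x"
      proof (cases "x > 0 \<and> \<bar>x - x0\<bar> < r")
        case True then show ?thesis using wr[of x] c bnd[of x] by (simp add: h_def)
      next
        case False then show ?thesis by (auto simp: h_def b_def)
      qed
      then show ?thesis using False by simp
    qed
  qed
  moreover have "(\<integral>x. indicator {x0 - r/2 .. x0 + r/2} x * K \<partial>lborel) = r * K"
    using r by simp
  ultimately show False using I0 r K by (simp add: mult_pos_pos) (smt (verit) mult_pos_pos)
qed

lemma gamma_laplace:
  fixes c p :: real assumes c: "c > 0" and p: "p > 0"
  shows "(\<integral>\<^sup>+ t. indicator {0<..} t * ennreal (t powr (p-1) * exp(-c*t)) \<partial>lborel) = ennreal (Gamma p / c powr p)"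
proof -
  have G: "(\<integral>\<^sup>+ t. indicator {0..} t * ennreal (t powr (p - 1) / exp t) \<partial>lborel) = ennreal (Gamma p)"
  proof -
    have "(\<lambda>t. ennreal (indicator {0..} t * t powr (p - 1) / exp t)) = (\<lambda>t::real. indicator {0..} t * ennreal (t powr (p - 1) / exp t))"
      by (auto simp: indicator_def fun_eq_iff)
    then show ?thesis using nn_integral_has_integral_lebesgue[OF _ Gamma_integral_real[OF p]] by simp
  qed
  define f where "f = (\<lambda>t::real. indicator {0..} t * ennreal (t powr (p - 1) / exp t))"
  have fm[measurable]: "f \<in> borel_measurable borel" unfolding f_def by measurable
  have "(\<integral>\<^sup>+ t. f t \<partial>lborel) = ennreal \<bar>c\<bar> * (\<integral>\<^sup>+ t. f (0 + c * t) \<partial>lborel)"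
    by (rule nn_integral_real_affine[OF fm]) (use c in auto)
  also have "(\<lambda>t. f (0 + c * t)) = (\<lambda>t. ennreal (c powr (p-1)) * (indicator {0<..} t * ennreal (t powr (p-1) * exp(-c*t))))"
  proof
    fix t :: real
    show "f (0 + c * t) = ennreal (c powr (p-1)) * (indicator {0<..} t * ennreal (t powr (p-1) * exp(-c*t)))"
    proof (cases "t > 0")
      case True
      then show ?thesis using c
        by (simp add: f_def powr_mult ennreal_mult[symmetric] exp_minus field_simps zero_le_mult_iff)
    next
      case False
      then show ?thesis using c by (cases "t = 0") (auto simp: f_def zero_le_mult_iff indicator_def)
    qed
  qed
  also have "(\<integral>\<^sup>+ t. ennreal (c powr (p-1)) * (indicator {0<..} t * ennreal (t powr (p-1) * exp(-c*t))) \<partial>lborel)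
     = ennreal (c powr (p-1)) * (\<integral>\<^sup>+ t. indicator {0<..} t * ennreal (t powr (p-1) * exp(-c*t)) \<partial>lborel)"
    by (rule nn_integral_cmult) measurable
  finally have "ennreal (Gamma p) = ennreal c * ennreal (c powr (p-1)) * (\<integral>\<^sup>+ t. indicator {0<..} t * ennreal (t powr (p-1) * exp(-c*t)) \<partial>lborel)"
    using G c by (simp add: f_def mult.assoc)
  also have "ennreal c * ennreal (c powr (p-1)) = ennreal (c powr p)"
    using c by (simp add: ennreal_mult[symmetric] powr_diff)
  finally have eq: "ennreal (Gamma p) = ennreal (c powr p) * (\<integral>\<^sup>+ t. indicator {0<..} t * ennreal (t powr (p-1) * exp(-c*t)) \<partial>lborel)" .
  have cp: "c powr p > 0" using c by simp
  have "ennreal (Gamma p / c powr p) = ennreal (Gamma p) / ennreal (c powr p)"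
    using cp Gamma_real_pos[OF p] by (simp add: divide_ennreal)
  also have "\<dots> = (\<integral>\<^sup>+ t. indicator {0<..} t * ennreal (t powr (p-1) * exp(-c*t)) \<partial>lborel)"
    unfolding eq using cp by (subst mult.commute, subst ennreal_mult_divide_eq) auto
  finally show ?thesis ..
qed

lemma exp_laplace:
  fixes c :: real assumes c: "c > 0"
  shows "(\<integral>\<^sup>+ t. indicator {0<..} t * ennreal (exp(-c*t)) \<partial>lborel) = ennreal (1/c)"
proof -
  have "(\<integral>\<^sup>+ t. indicator {0<..} t * ennreal (exp(-c*t)) \<partial>lborel) =
        (\<integral>\<^sup>+ t. indicator {0<..} t * ennreal (t powr (1-1) * exp(-c*t)) \<partial>lborel)"
    by (intro nn_integral_cong) (auto simp: indicator_def)
  also have "\<dots> = ennreal (1/c)" using gamma_laplace[OF c, of 1] c by simp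
  finally show ?thesis .
qed

lemma tail_laplace:
  fixes c y :: real assumes c: "c > 0"
  shows "(\<integral>\<^sup>+ t. indicator {y<..} t * ennreal (exp(-c*t)) \<partial>lborel) = ennreal (exp(-c*y)/c)"
proof -
  define f where "f = (\<lambda>t::real. indicator {y<..} t * ennreal (exp(-c*t)))"
  have fm[measurable]: "f \<in> borel_measurable borel" unfolding f_def by measurable
  have "(\<integral>\<^sup>+ t. f t \<partial>lborel) = ennreal \<bar>1\<bar> * (\<integral>\<^sup>+ t. f (y + 1 * t) \<partial>lborel)"
    by (rule nn_integral_real_affine[OF fm]) auto
  also have "(\<lambda>t. f (y + 1 * t)) = (\<lambda>t. ennreal (exp(-c*y)) * (indicator {0<..} t * ennreal (exp(-c*t))))"
    by (auto simp: f_def fun_eq_iff indicator_def ennreal_mult[symmetric] algebra_simps exp_add[symmetric])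
  also have "(\<integral>\<^sup>+ t. ennreal (exp(-c*y)) * (indicator {0<..} t * ennreal (exp(-c*t))) \<partial>lborel)
      = ennreal (exp(-c*y)) * ennreal (1/c)"
    using exp_laplace[OF c] by (subst nn_integral_cmult) auto
  finally show ?thesis using c by (simp add: f_def ennreal_mult[symmetric])
qed

lemma tail_laplace':
  fixes c y :: real assumes c: "c > 0"
  shows "(\<integral>\<^sup>+ t. indicator {y..} t * ennreal (exp(-c*t)) \<partial>lborel) = ennreal (exp(-c*y)/c)"
proof -
  have "(\<integral>\<^sup>+ t. indicator {y..} t * ennreal (exp(-c*t)) \<partial>lborel) = (\<integral>\<^sup>+ t. indicator {y<..} t * ennreal (exp(-c*t)) \<partial>lborel)"
    by (intro nn_integral_cong_AE eventually_mono[OF AE_lborel_singleton[of y]]) (auto simp: indicator_def)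
  then show ?thesis using tail_laplace[OF c] by simp
qed

definition gk :: "real \<Rightarrow> real \<Rightarrow> real" where
  "gk lam x = exp (-(lam\<^sup>2/2)*x) / sqrt (2*pi*x)"

lemma gk_measurable[measurable]: "gk lam \<in> borel_measurable borel"
  unfolding gk_def by measurable

lemma gk_nonneg: "gk lam x \<ge> 0" if "x \<ge> 0"
  using that by (simp add: gk_def)

lemma g_laplace:
  fixes s lam :: real assumes s: "s \<ge> 0" and lam: "lam > 0"
  shows "(\<integral>\<^sup>+ x. indicator {0<..} x * ennreal (exp(-s*x) * gk lam x) \<partial>lborel) = ennreal (1/sqrt(2 * s + lam\<^sup>2))"
proof -
  define c where "c = s + lam\<^sup>2/2"
  have c: "c > 0" using s lam by (auto simp: c_def intro!: add_nonneg_pos)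
  have "(\<integral>\<^sup>+ x. indicator {0<..} x * ennreal (exp(-s*x) * gk lam x) \<partial>lborel) =
     (\<integral>\<^sup>+ x. ennreal (1/sqrt(2*pi)) * (indicator {0<..} x * ennreal (x powr (1/2 - 1) * exp(-c*x))) \<partial>lborel)"
  proof (intro nn_integral_cong)
    fix x :: real
    show "indicator {0<..} x * ennreal (exp(-s*x) * gk lam x) = ennreal (1/sqrt(2*pi)) * (indicator {0<..} x * ennreal (x powr (1/2 - 1) * exp(-c*x)))"
    proof (cases "x > 0")
      case True
      have "exp(-s*x) * gk lam x = 1/sqrt(2*pi) * (x powr (1/2 - 1) * exp(-c*x))"
        using True by (simp add: gk_def c_def powr_minus powr_half_sqrt real_sqrt_mult exp_add[symmetric] field_simps)
      then show ?thesis using True by (simp add: ennreal_mult[symmetric])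
    qed simp
  qed
  also have "\<dots> = ennreal (1/sqrt(2*pi)) * ennreal (Gamma (1/2) / c powr (1/2))"
    using gamma_laplace[OF c, of "1/2"] by (subst nn_integral_cmult) auto
  also have "\<dots> = ennreal (1/sqrt(2 * s + lam\<^sup>2))"
  proof -
    have "1/sqrt(2*pi) * (Gamma (1/2) / c powr (1/2)) = 1/sqrt(2 * s + lam\<^sup>2)"
    proof -
      have h: "sqrt 2 * sqrt ((s*2+lam\<^sup>2)/2) = sqrt (s*2+lam\<^sup>2)"
        by (subst real_sqrt_mult[symmetric]) simp
      show ?thesis using c h by (simp add: Gamma_one_half_real powr_half_sqrt c_def real_sqrt_mult field_simps)
    qed
    then show ?thesis by (simp add: ennreal_mult[symmetric])
  qed
  finally show ?thesis .
qed

definition Gn :: "real \<Rightarrow> real \<Rightarrow> ennreal" where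
  "Gn lam x = (\<integral>\<^sup>+ y. indicator {0<..x} y * ennreal (gk lam y) \<partial>lborel)"

definition Gk :: "real \<Rightarrow> real \<Rightarrow> real" where
  "Gk lam x = enn2real (Gn lam x)"

lemma Gn_total:
  assumes lam: "lam > 0"
  shows "(\<integral>\<^sup>+ y. indicator {0<..} y * ennreal (gk lam y) \<partial>lborel) = ennreal (1/lam)"
  using g_laplace[of 0 lam] lam by simp

lemma Gn_split:
  assumes "0 \<le> y" "y \<le> x"
  shows "Gn lam x = Gn lam y + (\<integral>\<^sup>+ t. indicator {y<..x} t * ennreal (gk lam t) \<partial>lborel)"
proof -
  have "Gn lam x = (\<integral>\<^sup>+ t. indicator {0<..y} t * ennreal (gk lam t) + indicator {y<..x} t * ennreal (gk lam t) \<partial>lborel)"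
    unfolding Gn_def using assms by (intro nn_integral_cong) (auto simp: indicator_def)
  also have "\<dots> = Gn lam y + (\<integral>\<^sup>+ t. indicator {y<..x} t * ennreal (gk lam t) \<partial>lborel)"
    unfolding Gn_def by (rule nn_integral_add) auto
  finally show ?thesis .
qed

lemma Gn_tail:
  assumes "0 \<le> x" "lam > 0"
  shows "ennreal (1/lam) = Gn lam x + (\<integral>\<^sup>+ t. indicator {x<..} t * ennreal (gk lam t) \<partial>lborel)"
proof -
  have "ennreal (1/lam) = (\<integral>\<^sup>+ t. indicator {0<..x} t * ennreal (gk lam t) + indicator {x<..} t * ennreal (gk lam t) \<partial>lborel)"
    unfolding Gn_total[OF assms(2), symmetric] using assms by (intro nn_integral_cong) (auto simp: indicator_def)
  also have "\<dots> = Gn lam x + (\<integral>\<^sup>+ t. indicator {x<..} t * ennreal (gk lam t) \<partial>lborel)"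
    unfolding Gn_def by (rule nn_integral_add) auto
  finally show ?thesis .
qed

lemma gk_mono: assumes "0 < y" "y \<le> t" shows "gk lam t \<le> gk lam y"
  unfolding gk_def using assms
  by (intro frac_le) (auto intro!: mult_left_mono simp: mult_nonneg_nonneg)

lemma Gn_le: assumes "lam > 0" "0 \<le> x" shows "Gn lam x \<le> ennreal (1/lam)"
  using Gn_tail[OF assms(2,1)] by (metis le_iff_add)

lemma Gn_eq: assumes "lam > 0" "0 \<le> x" shows "Gn lam x = ennreal (Gk lam x)"
  using Gn_le[OF assms] unfolding Gk_def
  by (metis ennreal_enn2real ennreal_less_top order_le_less_trans top.not_eq_extremum)

lemma Gk_nonneg: "Gk lam x \<ge> 0" by (simp add: Gk_def)

lemma Gk_le: assumes "lam > 0" "0 \<le> x" shows "Gk lam x \<le> 1/lam"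
  using Gn_le[OF assms] Gn_eq[OF assms] assms by (simp add: ennreal_le_iff)

lemma Gk_lip:
  assumes lam: "lam > 0" and "0 < y" "y \<le> x"
  shows "Gk lam y \<le> Gk lam x" "Gk lam x \<le> Gk lam y + (x - y) * gk lam y"
proof -
  define R where "R = (\<integral>\<^sup>+ t. indicator {y<..x} t * ennreal (gk lam t) \<partial>lborel)"
  have R: "R \<le> ennreal ((x - y) * gk lam y)"
  proof -
    have "R \<le> (\<integral>\<^sup>+ t. ennreal (gk lam y) * indicator {y<..x} t \<partial>lborel)"
      unfolding R_def using assms
      by (intro nn_integral_mono) (auto simp: indicator_def intro!: ennreal_leI gk_mono)
    also have "\<dots> = ennreal (gk lam y) * ennreal (x - y)"
      using assms by (subst nn_integral_cmult_indicator) auto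
    also have "\<dots> = ennreal ((x - y) * gk lam y)"
      using assms gk_nonneg[of y lam] by (simp add: ennreal_mult[symmetric] mult.commute)
    finally show ?thesis .
  qed
  then have Rf: "R = ennreal (enn2real R)"
    by (metis ennreal_enn2real ennreal_less_top order_le_less_trans top.not_eq_extremum)
  have "ennreal (Gk lam x) = ennreal (Gk lam y) + ennreal (enn2real R)"
    using Gn_split[of y x lam] assms Gn_eq[of lam x] Gn_eq[of lam y] Rf unfolding R_def by simp
  then have eq: "Gk lam x = Gk lam y + enn2real R"
    by (simp add: Gk_nonneg ennreal_plus[symmetric] del: ennreal_plus)
  have "enn2real R \<le> (x - y) * gk lam y"
    using R Rf assms gk_nonneg[of y lam] by (metis ennreal_le_iff mult_nonneg_nonneg diff_ge_0_iff_ge less_imp_le)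
  then show "Gk lam y \<le> Gk lam x" "Gk lam x \<le> Gk lam y + (x - y) * gk lam y"
    using eq by (auto simp: enn2real_nonneg)
qed

lemma Gk_tail:
  assumes lam: "lam > 0" and x: "0 < x"
  shows "1/lam - Gk lam x \<le> exp (-(lam\<^sup>2/2)*x) / ((lam\<^sup>2/2) * sqrt (2*pi*x))"
proof -
  define a where "a = lam\<^sup>2/2"
  have a: "a > 0" using lam by (simp add: a_def)
  define R where "R = (\<integral>\<^sup>+ t. indicator {x<..} t * ennreal (gk lam t) \<partial>lborel)"
  have "R \<le> (\<integral>\<^sup>+ t. ennreal (1/sqrt(2*pi*x)) * (indicator {x<..} t * ennreal (exp(-a*t))) \<partial>lborel)"
    unfolding R_def
  proof (intro nn_integral_mono)
    fix t :: real
    show "indicator {x<..} t * ennreal (gk lam t) \<le> ennreal (1/sqrt(2*pi*x)) * (indicator {x<..} t * ennreal (exp(-a*t)))"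
    proof (cases "t > x")
      case True
      have "gk lam t \<le> 1/sqrt(2*pi*x) * exp(-a*t)"
        unfolding gk_def a_def using True x
        by (simp add: divide_simps mult_left_mono)
      moreover have "ennreal (1/sqrt(2*pi*x)) * ennreal (exp(-a*t)) = ennreal (1/sqrt(2*pi*x) * exp(-a*t))"
        by (rule ennreal_mult[symmetric]) (use x in auto)
      ultimately show ?thesis using True by (simp add: ennreal_leI)
    qed simp
  qed
  also have "\<dots> = ennreal (1/sqrt(2*pi*x)) * ennreal (exp(-a*x)/a)"
    using tail_laplace[OF a, of x] by (subst nn_integral_cmult) auto
  also have "\<dots> = ennreal (exp (-(lam\<^sup>2/2)*x) / ((lam\<^sup>2/2) * sqrt (2*pi*x)))"
    using a x by (simp add: ennreal_mult[symmetric] a_def)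
  finally have R: "R \<le> ennreal (exp (-(lam\<^sup>2/2)*x) / ((lam\<^sup>2/2) * sqrt (2*pi*x)))" .
  have "ennreal (1/lam) = ennreal (Gk lam x) + R"
    using Gn_tail[of x lam] Gn_eq[of lam x] assms unfolding R_def by simp
  also have "\<dots> \<le> ennreal (Gk lam x) + ennreal (exp (-(lam\<^sup>2/2)*x) / ((lam\<^sup>2/2) * sqrt (2*pi*x)))"
    using R by (rule add_left_mono)
  also have "\<dots> = ennreal (Gk lam x + exp (-(lam\<^sup>2/2)*x) / ((lam\<^sup>2/2) * sqrt (2*pi*x)))"
    using x by (intro ennreal_plus[symmetric]) (auto simp: Gk_nonneg)
  finally show ?thesis
    using x lam by (subst (asm) ennreal_le_iff) (auto simp: Gk_nonneg)
qed

lemma Gk_cont: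
  assumes lam: "lam > 0"
  shows "continuous_on {0<..} (Gk lam)"
  unfolding continuous_on_iff
proof (intro ballI allI impI)
  fix x0 e :: real assume x0: "x0 \<in> {0<..}" and e: "e > 0"
  define L where "L = gk lam (x0/2) + 1"
  have L: "L > 0" using gk_nonneg[of "x0/2" lam] x0 by (simp add: L_def add_nonneg_pos)
  define d where "d = min (x0/2) (e / L)"
  have d: "d > 0" using x0 e L by (simp add: d_def)
  have "dist (Gk lam x') (Gk lam x0) < e" if "x' \<in> {0<..}" "dist x' x0 < d" for x'
  proof -
    have x'pos: "x' > x0/2" using that by (auto simp: d_def dist_real_def abs_if split: if_splits)
    have b: "\<bar>Gk lam x' - Gk lam x0\<bar> \<le> \<bar>x' - x0\<bar> * gk lam (x0/2)"
    proof (cases "x' \<ge> x0")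
      case True
      have "gk lam x0 \<le> gk lam (x0/2)" using x0 by (intro gk_mono) auto
      then have m: "(x' - x0) * gk lam x0 \<le> (x' - x0) * gk lam (x0/2)" using True by (intro mult_left_mono) auto
      have "Gk lam x0 \<le> Gk lam x'" "Gk lam x' \<le> Gk lam x0 + (x' - x0) * gk lam x0"
        using Gk_lip[OF lam, of x0 x'] x0 True by auto
      moreover have a: "\<bar>Gk lam x' - Gk lam x0\<bar> = Gk lam x' - Gk lam x0" "\<bar>x' - x0\<bar> = x' - x0"
        using True \<open>Gk lam x0 \<le> Gk lam x'\<close> by auto
      ultimately show ?thesis using m unfolding a by linarith
    next
      case False
      have "gk lam x' \<le> gk lam (x0/2)" using x0 x'pos by (intro gk_mono) auto
      then have m: "(x0 - x') * gk lam x' \<le> (x0 - x') * gk lam (x0/2)" using False by (intro mult_left_mono) auto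
      have "Gk lam x' \<le> Gk lam x0" "Gk lam x0 \<le> Gk lam x' + (x0 - x') * gk lam x'"
        using Gk_lip[OF lam, of x' x0] x'pos x0 False by auto
      moreover have a: "\<bar>Gk lam x' - Gk lam x0\<bar> = Gk lam x0 - Gk lam x'" "\<bar>x' - x0\<bar> = x0 - x'"
        using False \<open>Gk lam x' \<le> Gk lam x0\<close> by auto
      ultimately show ?thesis using m unfolding a by linarith
    qed
    also have "\<dots> \<le> \<bar>x' - x0\<bar> * L" unfolding L_def by (intro mult_left_mono) auto
    also have "\<dots> < d * L" using that L by (intro mult_strict_right_mono) (auto simp: dist_real_def)
    also have "\<dots> \<le> e" using L e by (simp add: d_def min_def field_simps)
    finally show ?thesis by (simp add: dist_real_def)
  qed
  then show "\<exists>d>0. \<forall>x'\<in>{0<..}. dist x' x0 < d \<longrightarrow> dist (Gk lam x') (Gk lam x0) < e"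
    using d by blast
qed

lemma gk_measurable_lborel[measurable]: "gk lam \<in> borel_measurable lborel"
  by (simp add: measurable_lborel1)

lemma pred_Ioc_snd[measurable]: "Measurable.pred (borel \<Otimes>\<^sub>M borel) (\<lambda>z::real\<times>real. snd z \<in> {0<..fst z})"
  unfolding greaterThanAtMost_iff by measurable

lemma G_laplace:
  assumes lam: "lam > 0" and s: "s > 0"
  shows "(\<integral>\<^sup>+ x. indicator {0<..} x * ennreal (exp(-s*x)) * Gn lam x \<partial>lborel) = ennreal (1/(s * sqrt(2 * s + lam\<^sup>2)))"
proof -
  have "(\<integral>\<^sup>+ x. indicator {0<..} x * ennreal (exp(-s*x)) * Gn lam x \<partial>lborel) =
     (\<integral>\<^sup>+ x. \<integral>\<^sup>+ y. indicator {0<..} x * ennreal (exp(-s*x)) * (indicator {0<..x} y * ennreal (gk lam y)) \<partial>lborel \<partial>lborel)"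
    unfolding Gn_def by (intro nn_integral_cong nn_integral_cmult[symmetric]) measurable
  also have "\<dots> = (\<integral>\<^sup>+ y. \<integral>\<^sup>+ x. indicator {0<..} x * ennreal (exp(-s*x)) * (indicator {0<..x} y * ennreal (gk lam y)) \<partial>lborel \<partial>lborel)"
    by (rule lborel_pair.Fubini'[symmetric]) measurable
  also have "\<dots> = (\<integral>\<^sup>+ y. ennreal (1/s) * (indicator {0<..} y * ennreal (exp(-s*y) * gk lam y)) \<partial>lborel)"
  proof (intro nn_integral_cong)
    fix y :: real
    show "(\<integral>\<^sup>+ x. indicator {0<..} x * ennreal (exp(-s*x)) * (indicator {0<..x} y * ennreal (gk lam y)) \<partial>lborel) =
       ennreal (1/s) * (indicator {0<..} y * ennreal (exp(-s*y) * gk lam y))"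
    proof (cases "y > 0")
      case True
      have "(\<integral>\<^sup>+ x. indicator {0<..} x * ennreal (exp(-s*x)) * (indicator {0<..x} y * ennreal (gk lam y)) \<partial>lborel) =
         (\<integral>\<^sup>+ x. ennreal (gk lam y) * (indicator {y..} x * ennreal (exp(-s*x))) \<partial>lborel)"
        using True by (intro nn_integral_cong) (auto simp: indicator_def mult.commute)
      also have "\<dots> = ennreal (gk lam y) * ennreal (exp(-s*y)/s)"
        using tail_laplace'[OF s, of y] by (subst nn_integral_cmult) auto
      also have "\<dots> = ennreal (1/s) * (indicator {0<..} y * ennreal (exp(-s*y) * gk lam y))"
        using True s gk_nonneg[of y lam] by (simp add: ennreal_mult[symmetric] field_simps)
      finally show ?thesis .
    qed simp
  qed
  also have "\<dots> = ennreal (1/s) * ennreal (1/sqrt(2 * s + lam\<^sup>2))"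
    using g_laplace[of s lam] s lam by (subst nn_integral_cmult) auto
  also have "\<dots> = ennreal (1/(s * sqrt(2 * s + lam\<^sup>2)))"
    using s by (simp add: ennreal_mult[symmetric])
  finally show ?thesis .
qed

definition vk :: "real \<Rightarrow> real \<Rightarrow> real \<Rightarrow> real" where
  "vk \<delta> lam x = (gk lam x + lam/2 + lam\<^sup>2/2 * Gk lam x) / \<delta>"

lemma Gn_measurable[measurable]: "Gn lam \<in> borel_measurable borel"
proof -
  have "(\<lambda>x. \<integral>\<^sup>+ y. indicator {0<..x} y * ennreal (gk lam y) \<partial>lborel) \<in> borel_measurable borel"
    by (rule lborel.borel_measurable_nn_integral) measurable
  then show ?thesis unfolding Gn_def[abs_def] .
qed

lemma v_laplace:
  assumes d: "\<delta> > 0" and lam: "lam > 0" and s: "s > 0"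
  shows "(\<integral>\<^sup>+ x. indicator {0<..} x * ennreal (exp(-s*x) * vk \<delta> lam x) \<partial>lborel) = ennreal (1 / ig_exponent \<delta> lam s)"
proof -
  define r where "r = sqrt (2 * s + lam\<^sup>2)"
  have r2: "r\<^sup>2 = 2 * s + lam\<^sup>2" unfolding r_def using s by (intro real_sqrt_pow2) auto
  have rl: "r > lam" unfolding r_def using s lam by (intro real_less_rsqrt) (auto simp: power2_eq_square)
  have "(\<integral>\<^sup>+ x. indicator {0<..} x * ennreal (exp(-s*x) * vk \<delta> lam x) \<partial>lborel) =
    (\<integral>\<^sup>+ x. ennreal (1/\<delta>) * ((indicator {0<..} x * ennreal (exp(-s*x) * gk lam x) +
        ennreal (lam/2) * (indicator {0<..} x * ennreal (exp(-s*x)))) +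
        ennreal (lam\<^sup>2/2) * (indicator {0<..} x * ennreal (exp(-s*x)) * Gn lam x)) \<partial>lborel)"
  proof (intro nn_integral_cong)
    fix x :: real
    show "indicator {0<..} x * ennreal (exp(-s*x) * vk \<delta> lam x) =
      ennreal (1/\<delta>) * ((indicator {0<..} x * ennreal (exp(-s*x) * gk lam x) +
        ennreal (lam/2) * (indicator {0<..} x * ennreal (exp(-s*x)))) +
        ennreal (lam\<^sup>2/2) * (indicator {0<..} x * ennreal (exp(-s*x)) * Gn lam x))"
    proof (cases "x > 0")
      case True
      have g0: "gk lam x \<ge> 0" using True gk_nonneg by auto
      have G0: "Gk lam x \<ge> 0" by (rule Gk_nonneg)
      have "exp(-s*x) * vk \<delta> lam x = 1/\<delta> * ((exp(-s*x) * gk lam x + lam/2 * exp(-s*x)) + lam\<^sup>2/2 * (exp(-s*x) * Gk lam x))"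
        using d by (simp add: vk_def divide_simps) (simp add: algebra_simps)
      then show ?thesis using True Gn_eq[OF lam, of x] d lam g0 G0
        by (simp add: ennreal_mult[symmetric] ennreal_plus[symmetric] mult.assoc del: ennreal_plus)
    qed simp
  qed
  also have "\<dots> = ennreal (1/\<delta>) * ((ennreal (1/r) + ennreal (lam/2) * ennreal (1/s)) + ennreal (lam\<^sup>2/2) * ennreal (1/(s*r)))"
    apply (subst nn_integral_cmult, measurable)
    apply (subst nn_integral_add, measurable)
    apply (subst nn_integral_add, measurable)
    apply (subst nn_integral_cmult, measurable)
    apply (subst nn_integral_cmult, measurable)
    using g_laplace[of s lam] exp_laplace[OF s] G_laplace[OF lam s] s lam
    unfolding r_def by simp
  also have "\<dots> = ennreal (1/\<delta> * ((1/r + lam/2 * (1/s)) + lam\<^sup>2/2 * (1/(s*r))))"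
    using d lam s rl by (simp add: ennreal_mult[symmetric] ennreal_plus[symmetric] del: ennreal_plus)
  also have "1/\<delta> * ((1/r + lam/2 * (1/s)) + lam\<^sup>2/2 * (1/(s*r))) = 1 / ig_exponent \<delta> lam s"
  proof -
    have "r - lam \<noteq> 0" "r \<noteq> 0" using rl lam by auto
    then show ?thesis unfolding ig_exponent_def r_def[symmetric] using d s r2
      by (simp add: field_simps power2_eq_square)
  qed
  finally show ?thesis .
qed


lemma phi_pos: assumes "\<delta> > 0" "lam > 0" "s > 0" shows "ig_exponent \<delta> lam s > 0"
proof -
  have "lam < sqrt(2 * s + lam\<^sup>2)" by (rule real_less_rsqrt) (use assms in simp)
  then show ?thesis unfolding ig_exponent_def using assms by simp
qed

lemma phi_lim: assumes "\<delta> > 0" "lam > 0" "t > 0"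
  shows "((\<lambda>n::nat. exp (- t * ig_exponent \<delta> lam (real n))) \<longlongrightarrow> 0) sequentially"
  unfolding ig_exponent_def using assms by real_asymp

lemma per_t:
  assumes delta_pos: "\<delta> > 0" and lam_pos: "lam > 0"
    and prob: "prob_space M"
    and Sm: "S t \<in> borel_measurable M"
    and S_nonneg: "\<And>\<omega>. \<omega> \<in> space M \<Longrightarrow> S t \<omega> \<ge> 0"
    and S_laplace: "\<And>s. s \<ge> 0 \<Longrightarrow>
        (\<integral>\<omega>. exp (- s * S t \<omega>) \<partial>M) = exp (- t * ig_exponent \<delta> lam s)"
    and t: "t > 0" and s: "s \<ge> 0"
  shows "(\<integral>\<^sup>+ \<omega>. indicator {0<..} (S t \<omega>) * ennreal (exp (- s * S t \<omega>)) \<partial>M) = ennreal (exp (- t * ig_exponent \<delta> lam s))"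
proof -
  interpret prob_space M by (rule prob)
  have [measurable]: "S t \<in> borel_measurable M" by (rule Sm)
  have full: "(\<integral>\<^sup>+ \<omega>. ennreal (exp (- s * S t \<omega>)) \<partial>M) = ennreal (exp (- t * ig_exponent \<delta> lam s))" if s: "s \<ge> 0" for s
  proof -
    have "integrable M (\<lambda>\<omega>. exp (- s * S t \<omega>))"
      by (rule integrable_const_bound[where B=1]) (use S_nonneg s in \<open>auto intro!: AE_I2 simp: mult_nonneg_nonneg\<close>)
    then show ?thesis using S_laplace[OF s] by (subst nn_integral_eq_integral) auto
  qed
  define Z where "Z = {\<omega> \<in> space M. S t \<omega> \<le> 0}"
  have Zs[measurable]: "Z \<in> sets M" unfolding Z_def by measurable
  have Zle: "measure M Z \<le> exp (- t * ig_exponent \<delta> lam (real n))" for n :: nat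
  proof -
    have "emeasure M Z = (\<integral>\<^sup>+ \<omega>. indicator Z \<omega> \<partial>M)" by simp
    also have "\<dots> \<le> (\<integral>\<^sup>+ \<omega>. ennreal (exp (- real n * S t \<omega>)) \<partial>M)"
      by (intro nn_integral_mono) (auto simp: Z_def indicator_def dest: S_nonneg)
    also have "\<dots> = ennreal (exp (- t * ig_exponent \<delta> lam (real n)))" by (rule full) simp
    finally show ?thesis by (simp add: emeasure_eq_measure)
  qed
  have "measure M Z \<le> 0"
    by (rule LIMSEQ_le_const[OF phi_lim[OF delta_pos lam_pos t]]) (use Zle in auto)
  then have Z0: "emeasure M Z = 0" by (simp add: emeasure_eq_measure measure_nonneg antisym)
  have "(\<integral>\<^sup>+ \<omega>. ennreal (exp (- s * S t \<omega>)) \<partial>M) =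
     (\<integral>\<^sup>+ \<omega>. indicator {0<..} (S t \<omega>) * ennreal (exp (- s * S t \<omega>)) \<partial>M)"
  proof (rule nn_integral_cong_AE)
    have "AE \<omega> in M. \<omega> \<notin> Z" using Z0 Zs by (intro AE_not_in) (simp add: null_sets_def)
    then show "AE \<omega> in M. ennreal (exp (- s * S t \<omega>)) = indicator {0<..} (S t \<omega>) * ennreal (exp (- s * S t \<omega>))"
      using AE_space by eventually_elim (use S_nonneg in \<open>auto simp: Z_def indicator_def\<close>)
  qed
  then show ?thesis using full[OF s] by simp
qed

lemma u_laplace:
  fixes M :: "'a measure" and S :: "real \<Rightarrow> 'a \<Rightarrow> real"
    and u :: "real \<Rightarrow> real" and \<delta> lam :: real
  assumes delta_pos: "\<delta> > 0" and lam_pos: "lam > 0"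
    and prob: "prob_space M"
    and S_meas: "(\<lambda>(t, \<omega>). S t \<omega>) \<in> borel_measurable (lborel \<Otimes>\<^sub>M M)"
    and S_nonneg: "\<And>t \<omega>. t \<ge> 0 \<Longrightarrow> \<omega> \<in> space M \<Longrightarrow> S t \<omega> \<ge> 0"
    and S_laplace: "\<And>t s. t \<ge> 0 \<Longrightarrow> s \<ge> 0 \<Longrightarrow>
        (\<integral>\<omega>. exp (- s * S t \<omega>) \<partial>M) = exp (- t * ig_exponent \<delta> lam s)"
    and u_cont: "continuous_on {0<..} u"
    and u_nonneg: "\<And>x. x > 0 \<Longrightarrow> u x \<ge> 0"
    and u_density: "\<And>A. A \<in> sets borel \<Longrightarrow> A \<subseteq> {0<..} \<Longrightarrow>
        potential_measure M S A = (\<integral>\<^sup>+ x\<in>A. ennreal (u x) \<partial>lborel)"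
    and s: "s > 0"
  shows "(\<integral>\<^sup>+ x. indicator {0<..} x * ennreal (exp(-s*x) * u x) \<partial>lborel) = ennreal (1 / ig_exponent \<delta> lam s)"
proof -
  interpret M: prob_space M by (rule prob)
  interpret P: pair_sigma_finite lborel M
    unfolding pair_sigma_finite_def using lborel.sigma_finite_measure_axioms M.sigma_finite_measure_axioms by simp
  have Sm[measurable]: "(\<lambda>z. S (fst z) (snd z)) \<in> borel_measurable (lborel \<Otimes>\<^sub>M M)"
  proof -
    have "(\<lambda>(t, \<omega>). S t \<omega>) = (\<lambda>z. S (fst z) (snd z))" by (auto simp: fun_eq_iff)
    then show ?thesis using S_meas by simp
  qed
  have St[measurable]: "S t \<in> borel_measurable M" for t
    using measurable_compose_Pair1[of t lborel, OF _ Sm] by simp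
  define u' where "u' = (\<lambda>x. indicator {0<..} x * u x)"
  have u'm[measurable]: "u' \<in> borel_measurable borel"
    unfolding u'_def using borel_measurable_continuous_on_indicator[OF _ u_cont] by simp
  define N where "N = density (lborel \<Otimes>\<^sub>M M) (\<lambda>z::real \<times> 'a. indicator {0..} (fst z))"
  define \<nu> where "\<nu> = distr N borel (\<lambda>z. S (fst z) (snd z))"
  have sets_\<nu>[measurable_cong]: "sets \<nu> = sets borel" by (simp add: \<nu>_def)
  have int\<nu>: "(\<integral>\<^sup>+ x. g x \<partial>\<nu>) = (\<integral>\<^sup>+ z. indicator {0..} (fst z) * g (S (fst z) (snd z)) \<partial>(lborel \<Otimes>\<^sub>M M))"
    if g[measurable]: "g \<in> borel_measurable borel" for g
  proof -
    have "(\<integral>\<^sup>+ x. g x \<partial>\<nu>) = (\<integral>\<^sup>+ z. g (S (fst z) (snd z)) \<partial>N)"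
      unfolding \<nu>_def by (rule nn_integral_distr) (auto simp: N_def)
    also have "\<dots> = (\<integral>\<^sup>+ z. indicator {0..} (fst z) * g (S (fst z) (snd z)) \<partial>(lborel \<Otimes>\<^sub>M M))"
      unfolding N_def by (rule nn_integral_density) measurable
    finally show ?thesis .
  qed
  define \<mu> where "\<mu> = density lborel (\<lambda>x. ennreal (u' x))"
  have eq: "density \<nu> (indicator {0<..}) = \<mu>"
  proof (rule measure_eqI)
    show "sets (density \<nu> (indicator {0<..})) = sets \<mu>" by (simp add: \<mu>_def sets_\<nu>)
    fix A assume "A \<in> sets (density \<nu> (indicator {0<..}))"
    then have A[measurable]: "A \<in> sets borel" by (simp add: sets_\<nu>)
    have "emeasure (density \<nu> (indicator {0<..})) A = (\<integral>\<^sup>+ x. indicator {0<..} x * indicator A x \<partial>\<nu>)"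
      by (rule emeasure_density) (auto simp: sets_\<nu>)
    also have "\<dots> = (\<integral>\<^sup>+ x. indicator (A \<inter> {0<..}) x \<partial>\<nu>)"
      by (intro nn_integral_cong) (auto simp: indicator_def)
    also have "\<dots> = (\<integral>\<^sup>+ z. indicator {0..} (fst z) * indicator (A \<inter> {0<..}) (S (fst z) (snd z)) \<partial>(lborel \<Otimes>\<^sub>M M))"
      by (rule int\<nu>) measurable
    also have "\<dots> = (\<integral>\<^sup>+ \<omega>. \<integral>\<^sup>+ t. indicator {0..} t * indicator (A \<inter> {0<..}) (S t \<omega>) \<partial>lborel \<partial>M)"
      by (rule P.nn_integral_snd[symmetric, where f="\<lambda>z. indicator {0..} (fst z) * indicator (A \<inter> {0<..}) (S (fst z) (snd z))", simplified]) measurable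
    also have "\<dots> = potential_measure M S (A \<inter> {0<..})"
      unfolding potential_measure_def by (intro nn_integral_cong) (simp add: mult.commute)
    also have "\<dots> = (\<integral>\<^sup>+ x\<in>A \<inter> {0<..}. ennreal (u x) \<partial>lborel)"
      by (rule u_density) auto
    also have "\<dots> = (\<integral>\<^sup>+ x. ennreal (u' x) * indicator A x \<partial>lborel)"
      by (intro nn_integral_cong) (auto simp: u'_def indicator_def)
    also have "\<dots> = emeasure \<mu> A"
      unfolding \<mu>_def by (rule emeasure_density[symmetric]) auto
    finally show "emeasure (density \<nu> (indicator {0<..})) A = emeasure \<mu> A" .
  qed
  define f where "f = (\<lambda>x::real. ennreal (exp (-s*x)))"
  have fm[measurable]: "f \<in> borel_measurable borel" unfolding f_def by measurable
  have "(\<integral>\<^sup>+ x. indicator {0<..} x * ennreal (exp(-s*x) * u x) \<partial>lborel) = (\<integral>\<^sup>+ x. ennreal (u' x) * f x \<partial>lborel)"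
    by (intro nn_integral_cong) (auto simp: u'_def f_def indicator_def mult.commute u_nonneg ennreal_mult)
  also have "\<dots> = (\<integral>\<^sup>+ x. f x \<partial>\<mu>)"
    unfolding \<mu>_def by (rule nn_integral_density[symmetric]) auto
  also have "\<dots> = (\<integral>\<^sup>+ x. indicator {0<..} x * f x \<partial>\<nu>)"
    unfolding eq[symmetric] by (rule nn_integral_density) (auto simp: sets_\<nu> measurable_cong_sets[OF sets_\<nu> refl])
  also have "\<dots> = (\<integral>\<^sup>+ z. indicator {0..} (fst z) * (indicator {0<..} (S (fst z) (snd z)) * f (S (fst z) (snd z))) \<partial>(lborel \<Otimes>\<^sub>M M))"
    by (rule int\<nu>) measurable
  also have "\<dots> = (\<integral>\<^sup>+ t. \<integral>\<^sup>+ \<omega>. indicator {0..} t * (indicator {0<..} (S t \<omega>) * f (S t \<omega>)) \<partial>M \<partial>lborel)"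
    by (rule M.nn_integral_fst[symmetric, where f="\<lambda>z. indicator {0..} (fst z) * (indicator {0<..} (S (fst z) (snd z)) * f (S (fst z) (snd z)))", simplified]) measurable
  also have "\<dots> = (\<integral>\<^sup>+ t. indicator {0<..} t * ennreal (exp (- ig_exponent \<delta> lam s * t)) \<partial>lborel)"
  proof (rule nn_integral_cong_AE)
    show "AE t in lborel. (\<integral>\<^sup>+ \<omega>. indicator {0..} t * (indicator {0<..} (S t \<omega>) * f (S t \<omega>)) \<partial>M) =
        indicator {0<..} t * ennreal (exp (- ig_exponent \<delta> lam s * t))"
      using AE_lborel_singleton[of 0]
    proof eventually_elim
      case (elim t)
      show ?case
      proof (cases "t > 0")
        case True
        have "(\<integral>\<^sup>+ \<omega>. indicator {0..} t * (indicator {0<..} (S t \<omega>) * f (S t \<omega>)) \<partial>M) =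
            (\<integral>\<^sup>+ \<omega>. indicator {0<..} (S t \<omega>) * ennreal (exp (- s * S t \<omega>)) \<partial>M)"
          using True by (simp add: f_def)
        also have "\<dots> = ennreal (exp (- t * ig_exponent \<delta> lam s))"
          by (rule per_t[OF delta_pos lam_pos prob St]) (use S_nonneg S_laplace True s in auto)
        finally show ?thesis using True by (simp add: mult.commute)
      next
        case False
        then show ?thesis using elim by simp
      qed
    qed
  qed
  also have "\<dots> = ennreal (1 / ig_exponent \<delta> lam s)"
    by (rule exp_laplace[OF phi_pos[OF delta_pos lam_pos s]])
  finally show ?thesis .
qed


lemma lap_integral:
  fixes f :: "real \<Rightarrow> real"
  assumes cont: "continuous_on {0<..} f" and nonneg: "\<And>x. x > 0 \<Longrightarrow> f x \<ge> 0"
    and lap: "(\<integral>\<^sup>+ x. indicator {0<..} x * ennreal (exp(-s*x) * f x) \<partial>lborel) = ennreal L"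
    and L: "L \<ge> 0"
  shows "integrable lborel (\<lambda>x. indicator {0<..} x * exp(-s*x) * f x)"
    "(\<integral>x. indicator {0<..} x * exp(-s*x) * f x \<partial>lborel) = L"
proof -
  have m[measurable]: "(\<lambda>x. indicator {0<..} x * exp(-s*x) * f x) \<in> borel_measurable borel"
  proof -
    have "(\<lambda>x. indicator {0<..} x *\<^sub>R (exp(-s*x) * f x)) \<in> borel_measurable borel"
      by (rule borel_measurable_continuous_on_indicator) (auto intro!: continuous_intros cont)
    then show ?thesis by (simp add: mult.assoc)
  qed
  have nn: "(\<integral>\<^sup>+ x. ennreal (indicator {0<..} x * exp(-s*x) * f x) \<partial>lborel) = ennreal L"
    unfolding lap[symmetric] by (intro nn_integral_cong) (auto simp: indicator_def)
  have pos: "AE x in lborel. 0 \<le> indicator {0<..} x * exp(-s*x) * f x"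
    by (intro AE_I2) (auto simp: indicator_def nonneg)
  show "integrable lborel (\<lambda>x. indicator {0<..} x * exp(-s*x) * f x)"
  proof (rule integrableI_nonneg[OF _ pos])
    show "(\<lambda>x. indicator {0<..} x * exp(-s*x) * f x) \<in> borel_measurable lborel" by measurable
  qed (use nn in auto)
  show "(\<integral>x. indicator {0<..} x * exp(-s*x) * f x \<partial>lborel) = L"
  proof -
    have "(\<integral>x. indicator {0<..} x * exp(-s*x) * f x \<partial>lborel) = enn2real (\<integral>\<^sup>+ x. ennreal (indicator {0<..} x * exp(-s*x) * f x) \<partial>lborel)"
      by (rule integral_eq_nn_integral[OF _ pos]) measurable
    then show ?thesis using nn L by simp
  qed
qed

lemma gk_cont: "continuous_on {0<..} (gk lam)"
  unfolding gk_def by (intro continuous_intros) auto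

lemma vk_cont: "\<delta> > 0 \<Longrightarrow> lam > 0 \<Longrightarrow> continuous_on {0<..} (vk \<delta> lam)"
  unfolding vk_def[abs_def] by (intro continuous_intros gk_cont Gk_cont) auto

lemma vk_nonneg: "\<delta> > 0 \<Longrightarrow> lam > 0 \<Longrightarrow> x > 0 \<Longrightarrow> vk \<delta> lam x \<ge> 0"
  unfolding vk_def using gk_nonneg[of x lam] Gk_nonneg[of lam x] by simp

theorem mainTheorem5:
  fixes M :: "'a measure" and S :: "real \<Rightarrow> 'a \<Rightarrow> real"
    and u :: "real \<Rightarrow> real" and \<delta> lam :: real
  assumes delta_pos: "\<delta> > 0" and lam_pos: "lam > 0"
    and prob: "prob_space M"
    and S_meas: "(\<lambda>(t, \<omega>). S t \<omega>) \<in> borel_measurable (lborel \<Otimes>\<^sub>M M)"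
    and S_nonneg: "\<And>t \<omega>. t \<ge> 0 \<Longrightarrow> \<omega> \<in> space M \<Longrightarrow> S t \<omega> \<ge> 0"
    and S_laplace: "\<And>t s. t \<ge> 0 \<Longrightarrow> s \<ge> 0 \<Longrightarrow>
        (\<integral>\<omega>. exp (- s * S t \<omega>) \<partial>M) = exp (- t * ig_exponent \<delta> lam s)"
    and u_cont: "continuous_on {0<..} u"
    and u_nonneg: "\<And>x. x > 0 \<Longrightarrow> u x \<ge> 0"
    and u_density: "\<And>A. A \<in> sets borel \<Longrightarrow> A \<subseteq> {0<..} \<Longrightarrow>
        potential_measure M S A = (\<integral>\<^sup>+ x\<in>A. ennreal (u x) \<partial>lborel)"
  shows "u \<sim>[at_right 0] (\<lambda>x. 1 / (\<delta> * sqrt (2 * pi * x))) \<and>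
         u \<sim>[at_top] (\<lambda>x. lam / \<delta>)"
proof -
  define v where "v = vk \<delta> lam"
  have vc: "continuous_on {0<..} v" unfolding v_def by (rule vk_cont[OF delta_pos lam_pos])
  have lapu: "(\<integral>\<^sup>+ x. indicator {0<..} x * ennreal (exp(-s*x) * u x) \<partial>lborel) = ennreal (1 / ig_exponent \<delta> lam s)"
    if "s > 0" for s
    by (rule u_laplace[OF delta_pos lam_pos prob S_meas S_nonneg S_laplace u_cont u_nonneg u_density that]) auto
  have lapv: "(\<integral>\<^sup>+ x. indicator {0<..} x * ennreal (exp(-s*x) * v x) \<partial>lborel) = ennreal (1 / ig_exponent \<delta> lam s)"
    if "s > 0" for s
    unfolding v_def by (rule v_laplace[OF delta_pos lam_pos that])
  have phipos: "1 / ig_exponent \<delta> lam s \<ge> 0" if "s > 0" for s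
    using phi_pos[OF delta_pos lam_pos that] by simp
  define w where "w = (\<lambda>x. u x - v x)"
  have wc: "continuous_on {0<..} w" unfolding w_def by (intro continuous_intros u_cont vc)
  have wint: "integrable lborel (\<lambda>x. indicator {0<..} x * exp(-(real k+1)*x) * w x)"
    and wzero: "(\<integral>x. indicator {0<..} x * exp(-(real k+1)*x) * w x \<partial>lborel) = 0" for k :: nat
  proof -
    have s: "real k + 1 > 0" by simp
    note iu = lap_integral[OF u_cont u_nonneg lapu[OF s] phipos[OF s]]
    note iv = lap_integral[OF vc vk_nonneg[OF delta_pos lam_pos, folded v_def] lapv[OF s] phipos[OF s]]
    have eq: "(\<lambda>x. indicator {0<..} x * exp(-(real k+1)*x) * w x) =
       (\<lambda>x. indicator {0<..} x * exp(-(real k+1)*x) * u x - indicator {0<..} x * exp(-(real k+1)*x) * v x)"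
      by (simp add: w_def fun_eq_iff algebra_simps)
    show "integrable lborel (\<lambda>x. indicator {0<..} x * exp(-(real k+1)*x) * w x)"
      unfolding eq using iu(1) iv(1) by (rule Bochner_Integration.integrable_diff)
    show "(\<integral>x. indicator {0<..} x * exp(-(real k+1)*x) * w x \<partial>lborel) = 0"
      unfolding eq using iu iv by (subst Bochner_Integration.integral_diff) auto
  qed
  have wint': "integrable lborel (\<lambda>x. indicator {0<..} x * exp(-(real k+1)*x) * (- w x))" for k :: nat
    using integrable_minus[OF wint[of k]] by simp
  have wzero': "(\<integral>x. indicator {0<..} x * exp(-(real k+1)*x) * (- w x) \<partial>lborel) = 0" for k :: nat
    using wzero[of k] by simp
  have uv: "u x = v x" if x: "x > 0" for x
  proof -
    have "\<not> w x > 0" by (rule laplace_unique_pos[OF wc wint wzero x])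
    moreover have "\<not> - w x > 0"
      by (rule laplace_unique_pos[of "\<lambda>x. - w x", OF _ wint' wzero' x]) (intro continuous_intros wc)
    ultimately show ?thesis by (simp add: w_def)
  qed
  have evr: "eventually (\<lambda>x::real. x > 0) (at_right 0)" by (simp add: eventually_at_right_less)
  have evt: "eventually (\<lambda>x::real. x > 0) at_top" by (rule eventually_gt_at_top)
  have part1: "u \<sim>[at_right 0] (\<lambda>x. 1 / (\<delta> * sqrt (2 * pi * x)))"
  proof (rule asymp_equivI')
    define B where "B = (\<lambda>x. (lam/2 + lam\<^sup>2/2 * Gk lam x) * sqrt (2 * pi * x))"
    have e1: "((\<lambda>x::real. exp (-(lam\<^sup>2/2)*x)) \<longlongrightarrow> 1) (at_right 0)" by real_asymp
    have e2: "((\<lambda>x::real. lam * sqrt (2 * pi * x)) \<longlongrightarrow> 0) (at_right 0)" by real_asymp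
    have B0: "(B \<longlongrightarrow> 0) (at_right 0)"
    proof (rule tendsto_sandwich[OF _ _ tendsto_const e2])
      show "eventually (\<lambda>x. 0 \<le> B x) (at_right 0)"
        using evr by eventually_elim (use lam_pos in \<open>auto simp: B_def Gk_nonneg intro!: mult_nonneg_nonneg add_nonneg_nonneg\<close>)
      show "eventually (\<lambda>x. B x \<le> lam * sqrt (2 * pi * x)) (at_right 0)"
        using evr
      proof eventually_elim
        case (elim x)
        have "lam\<^sup>2/2 * Gk lam x \<le> lam\<^sup>2/2 * (1/lam)"
          using Gk_le[OF lam_pos, of x] elim by (intro mult_left_mono) auto
        also have "\<dots> = lam/2" using lam_pos by (simp add: power2_eq_square)
        finally have "lam/2 + lam\<^sup>2/2 * Gk lam x \<le> lam" by simp
        then show ?case unfolding B_def using elim by (intro mult_right_mono) auto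
      qed
    qed
    have "((\<lambda>x. exp (-(lam\<^sup>2/2)*x) + B x) \<longlongrightarrow> 1 + 0) (at_right 0)"
      by (rule tendsto_add[OF e1 B0])
    then have T: "((\<lambda>x. exp (-(lam\<^sup>2/2)*x) + B x) \<longlongrightarrow> 1) (at_right 0)" by simp
    show "((\<lambda>x. u x / (1 / (\<delta> * sqrt (2 * pi * x)))) \<longlongrightarrow> 1) (at_right 0)"
    proof (rule Lim_transform_eventually[OF T])
      show "eventually (\<lambda>x. exp (-(lam\<^sup>2/2)*x) + B x = u x / (1 / (\<delta> * sqrt (2 * pi * x)))) (at_right 0)"
        using evr
      proof eventually_elim
        case (elim x)
        have q: "sqrt (2 * pi * x) > 0" using elim by simp
        define q where "q = sqrt (2 * pi * x)"
        have q0: "q > 0" using q by (simp add: q_def)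
        have "u x / (1 / (\<delta> * q)) = q * (\<delta> * v x)" using uv[OF elim] by simp
        also have "\<delta> * v x = gk lam x + lam/2 + lam\<^sup>2/2 * Gk lam x" using delta_pos by (simp add: v_def vk_def)
        also have "q * (gk lam x + lam/2 + lam\<^sup>2/2 * Gk lam x) = q * gk lam x + (lam/2 + lam\<^sup>2/2 * Gk lam x) * q"
          by (simp add: algebra_simps)
        also have "q * gk lam x = exp (-(lam\<^sup>2/2)*x)" using q0 by (simp add: gk_def q_def[symmetric])
        finally show ?case by (simp add: B_def q_def)
      qed
    qed
  qed
  have part2: "u \<sim>[at_top] (\<lambda>x. lam / \<delta>)"
  proof (rule asymp_equivI')
    have g0: "((\<lambda>x. gk lam x) \<longlongrightarrow> 0) at_top" unfolding gk_def using lam_pos by real_asymp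
    have low: "((\<lambda>x::real. 1/lam - exp (-(lam\<^sup>2/2)*x) / ((lam\<^sup>2/2) * sqrt (2*pi*x))) \<longlongrightarrow> 1/lam) at_top"
      using lam_pos by real_asymp
    have G1: "((\<lambda>x. Gk lam x) \<longlongrightarrow> 1/lam) at_top"
    proof (rule tendsto_sandwich[OF _ _ low tendsto_const])
      show "eventually (\<lambda>x. 1/lam - exp (-(lam\<^sup>2/2)*x) / ((lam\<^sup>2/2) * sqrt (2*pi*x)) \<le> Gk lam x) at_top"
        using evt by eventually_elim (use Gk_tail[OF lam_pos] in force)
      show "eventually (\<lambda>x. Gk lam x \<le> 1/lam) at_top"
        using evt by eventually_elim (use Gk_le[OF lam_pos] in force)
    qed
    have "((\<lambda>x. (gk lam x + lam/2 + lam\<^sup>2/2 * Gk lam x) / \<delta> / (lam/\<delta>)) \<longlongrightarrow> (0 + lam/2 + lam\<^sup>2/2 * (1/lam)) / \<delta> / (lam/\<delta>)) at_top"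
      by (intro tendsto_intros g0 G1) (use delta_pos lam_pos in auto)
    also have "(0 + lam/2 + lam\<^sup>2/2 * (1/lam)) / \<delta> / (lam/\<delta>) = 1"
      using delta_pos lam_pos by (simp add: power2_eq_square field_simps)
    finally have T: "((\<lambda>x. (gk lam x + lam/2 + lam\<^sup>2/2 * Gk lam x) / \<delta> / (lam/\<delta>)) \<longlongrightarrow> 1) at_top" .
    show "((\<lambda>x. u x / (lam / \<delta>)) \<longlongrightarrow> 1) at_top"
    proof (rule Lim_transform_eventually[OF T])
      show "eventually (\<lambda>x. (gk lam x + lam/2 + lam\<^sup>2/2 * Gk lam x) / \<delta> / (lam/\<delta>) = u x / (lam / \<delta>)) at_top"
        using evt by eventually_elim (simp add: uv v_def vk_def)
    qed
  qed
  show ?thesis using part1 part2 by blast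
qed

end
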